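(* Let $G$ be a finite simple undirected graph with adjacency matrix $A=\sum_{r=0}^d\theta_rE_r$ (spectral decomposition), let $a,b$ be vertices, let $w_1,\dots,w_k$ and integers $f^r_\ell$ be as in the context, so that $\theta_r=\sum_{\ell=1}^k f^r_\ell w_\ell$, and define $F:\mathbb{T}^k\to\mathbb{C}$ by $F(\overline{z})=\sum_{r=0}^d\langle a|E_r|b\rangle\,e^{\mathrm{i} f^r(\overline{z})}$. Then for every integer $\ell\ge1$ the number \[\frac{1}{(2\pi)^{k}}\int_{\mathbb{T}^k}|F(\overline{z})|^{2\ell}\,\mathrm{d}\overline{z}\] is rational.
   Context: Here $\theta_0,\dots,\theta_d$ are the distinct eigenvalues of $A$ and $E_r$ is the orthogonal projection onto the $\theta_r$-eigenspace. Fix real numbers $w_1,\dots,w_k$ that are linearly independent over $\mathbb{Q}$ and such that every $\theta_r$ is an integer linear combination $\theta_r=\sum_{\ell=1}^k f^r_\ell w_\ell$ with $f^r_\ell\in\mathbb{Z}$. For $\overline{z}=(z_1,\dots,z_k)$ write $f^r(\overline{z})=\sum_{\ell=1}^k f^r_\ell z_\ell$. $\mathbb{T}^k=\mathbb{R}^k/2\pi\mathbb{Z}^k$ is the $k$-torus with Lebesgue measure $\mathrm{d}\overline{z}$, of total volume $(2\pi)^k$. *)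

theory Defs
  imports "HOL-Analysis.Analysis"
begin

definition simple_graph :: "('n::finite \<Rightarrow> 'n \<Rightarrow> bool) \<Rightarrow> bool" where
  "simple_graph adj \<longleftrightarrow> (\<forall>x y. adj x y \<longleftrightarrow> adj y x) \<and> (\<forall>x. \<not> adj x x)"

definition adjacency_matrix :: "('n::finite \<Rightarrow> 'n \<Rightarrow> bool) \<Rightarrow> real^'n^'n" where
  "adjacency_matrix adj = (\<chi> x y. if adj x y then 1 else 0)"

definition spectral_decomposition ::
  "real^'n^'n \<Rightarrow> nat \<Rightarrow> (nat \<Rightarrow> real) \<Rightarrow> (nat \<Rightarrow> real^'n^'n) \<Rightarrow> bool" where
  "spectral_decomposition A d \<theta> E \<longleftrightarrow>
     inj_on \<theta> {..d} \<and>
     (\<forall>r\<le>d. E r \<noteq> 0 \<and> transpose (E r) = E r \<and> E r ** E r = E r) \<and>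
     (\<forall>r\<le>d. \<forall>s\<le>d. r \<noteq> s \<longrightarrow> E r ** E s = 0) \<and>
     (\<Sum>r\<le>d. E r) = mat 1 \<and>
     A = (\<Sum>r\<le>d. \<theta> r *\<^sub>R E r)"

definition rat_lin_indep :: "('k::finite \<Rightarrow> real) \<Rightarrow> bool" where
  "rat_lin_indep w \<longleftrightarrow>
     (\<forall>q::'k \<Rightarrow> real. (\<forall>l. q l \<in> \<rat>) \<longrightarrow> (\<Sum>l\<in>UNIV. q l * w l) = 0 \<longrightarrow> (\<forall>l. q l = 0))"

end

theory Submission imports Defs "Jordan_Normal_Form.Char_Poly" begin

no_notation Matrix.vec_index (infixl \<open>$\<close> 100)
no_notation Matrix.scalar_prod (infix \<open>\<bullet>\<close> 70)

lemma eig_alg: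
  fixes U :: "'u set" and M :: "'u \<Rightarrow> 'u \<Rightarrow> int" and v :: "'u \<Rightarrow> real" and \<alpha> :: real
  assumes U: "finite U" and u0: "u0 \<in> U" "v u0 \<noteq> 0"
    and ev: "\<And>u. u \<in> U \<Longrightarrow> (\<Sum>u'\<in>U. real_of_int (M u u') * v u') = \<alpha> * v u"
  shows "\<exists>p::int poly. p \<noteq> 0 \<and> poly (map_poly real_of_int p) \<alpha> = 0"
proof -
  define n where "n = card U"
  define e where "e = from_nat_into U"
  have bij: "bij_betw e {..<n} U" unfolding e_def n_def by (rule bij_betw_from_nat_into_finite[OF U])
  define Mi where "Mi = Matrix.mat n n (\<lambda>(i,j). M (e i) (e j))"
  have Mi: "Mi \<in> carrier_mat n n" unfolding Mi_def by simp
  define Mr where "Mr = map_mat real_of_int Mi"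
  have Mr: "Mr \<in> carrier_mat n n" unfolding Mr_def using Mi by simp
  define vv where "vv = Matrix.vec n (\<lambda>i. v (e i))"
  obtain i0 where i0: "i0 < n" "e i0 = u0" using bij u0 unfolding bij_betw_def by auto
  have "eigenvector Mr vv \<alpha>"
    unfolding eigenvector_def
  proof (intro conjI)
    show "vv \<in> carrier_vec (dim_row Mr)" using Mr unfolding vv_def by simp
    show "vv \<noteq> 0\<^sub>v (dim_row Mr)"
    proof
      assume "vv = 0\<^sub>v (dim_row Mr)"
      then have "vec_index vv i0 = vec_index (0\<^sub>v (dim_row Mr)) i0" by simp
      then show False using i0 u0 Mr unfolding vv_def by simp
    qed
    show "Mr *\<^sub>v vv = \<alpha> \<cdot>\<^sub>v vv"
    proof (rule eq_vecI)
      show "dim_vec (Mr *\<^sub>v vv) = dim_vec (\<alpha> \<cdot>\<^sub>v vv)" using Mr unfolding vv_def by simp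
      fix i assume "i < dim_vec (\<alpha> \<cdot>\<^sub>v vv)"
      then have i: "i < n" unfolding vv_def by simp
      have "vec_index (Mr *\<^sub>v vv) i = (\<Sum>j<n. real_of_int (M (e i) (e j)) * v (e j))"
        using i Mr unfolding vv_def Mr_def Mi_def
        by (simp add: scalar_prod_def lessThan_atLeast0)
      also have "\<dots> = (\<Sum>u'\<in>U. real_of_int (M (e i) u') * v u')"
        by (rule sum.reindex_bij_betw[OF bij])
      also have "\<dots> = \<alpha> * v (e i)"
        using ev bij i unfolding bij_betw_def by auto
      finally show "vec_index (Mr *\<^sub>v vv) i = vec_index (\<alpha> \<cdot>\<^sub>v vv) i"
        using i unfolding vv_def by simp
    qed
  qed
  then have "eigenvalue Mr \<alpha>" unfolding eigenvalue_def by blast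
  then have "poly (char_poly Mr) \<alpha> = 0" using eigenvalue_root_char_poly[OF Mr] by simp
  moreover have "char_poly Mr = map_poly real_of_int (char_poly Mi)"
    unfolding Mr_def by (rule of_int_hom.char_poly_hom[OF Mi])
  moreover have "char_poly Mi \<noteq> 0"
    using degree_monic_char_poly[OF Mi] by auto
  ultimately show ?thesis by auto
qed

lemma strip_zero_root:
  fixes p :: "int poly" and \<alpha> :: real
  assumes "p \<noteq> 0" "poly (map_poly real_of_int p) \<alpha> = 0" "\<alpha> \<noteq> 0"
  shows "\<exists>q::int poly. poly q 0 \<noteq> 0 \<and> poly (map_poly real_of_int q) \<alpha> = 0"
proof -
  obtain q where q: "p = [:- 0, 1:] ^ order 0 p * q" "\<not> [:- 0, 1:] dvd q"
    using order_decomp[OF assms(1)] by blast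
  have "poly q 0 \<noteq> 0" using q(2) poly_eq_0_iff_dvd[of q 0] by auto
  moreover have "poly (map_poly real_of_int p) \<alpha> = \<alpha> ^ order 0 p * poly (map_poly real_of_int q) \<alpha>"
    by (subst q(1)) (simp add: hom_distribs)
  ultimately show ?thesis using assms by auto
qed

lemma moment_int:
  fixes \<theta> c :: "nat \<Rightarrow> real" and s :: "nat \<Rightarrow> int" and K :: "nat set"
  assumes base: "\<And>q. (\<Sum>r\<le>d. \<theta> r ^ q * c r) \<in> \<int>"
  assumes K: "finite K"
  shows "(\<Sum>t\<in>PiE K (\<lambda>_. {..d}). (\<Sum>k\<in>K. of_int (s k) * \<theta> (t k)) ^ p * (\<Prod>k\<in>K. c (t k))) \<in> \<int>"
  using K
proof (induction K arbitrary: p rule: finite_induct)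
  case empty
  then show ?case by simp
next
  case (insert j K)
  define Y where "Y t = (\<Sum>k'\<in>K. of_int (s k') * \<theta> (t k'))" for t
  define C where "C t = (\<Prod>k'\<in>K. c (t k'))" for t
  have Yeq: "(\<Sum>k'\<in>K. of_int (s k') * \<theta> (if k' = j then r else t k')) = Y t" for r t
    unfolding Y_def using insert.hyps by (intro sum.cong) auto
  have Ceq: "(\<Prod>k'\<in>K. c (if k' = j then r else t k')) = C t" for r t
    unfolding C_def using insert.hyps by (intro prod.cong) auto
  have "(\<Sum>(r,t)\<in>{..d} \<times> PiE K (\<lambda>_. {..d}). (of_int (s j) * \<theta> r + Y t) ^ p * (c r * C t))
     = (\<Sum>t\<in>PiE (insert j K) (\<lambda>_. {..d}). (\<Sum>k\<in>insert j K. of_int (s k) * \<theta> (t k)) ^ p * (\<Prod>k\<in>insert j K. c (t k)))"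
    by (rule sum.reindex_bij_witness[of _ "\<lambda>g. (g j, g(j := undefined))" "\<lambda>(y,g). g(j := y)"])
       (use insert.hyps in \<open>auto simp: PiE_def extensional_def Yeq Ceq\<close>)
  then have "(\<Sum>t\<in>PiE (insert j K) (\<lambda>_. {..d}). (\<Sum>k\<in>insert j K. of_int (s k) * \<theta> (t k)) ^ p * (\<Prod>k\<in>insert j K. c (t k)))
     = (\<Sum>(r,t)\<in>{..d} \<times> PiE K (\<lambda>_. {..d}). (of_int (s j) * \<theta> r + Y t) ^ p * (c r * C t))" by simp
  also have "\<dots> = (\<Sum>i\<le>p. of_nat (p choose i) * ((\<Sum>r\<le>d. (of_int (s j) * \<theta> r) ^ i * c r) *
        (\<Sum>t\<in>PiE K (\<lambda>_. {..d}). Y t ^ (p - i) * C t)))"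
    by (simp add: binomial_ring sum.cartesian_product[symmetric] sum_distrib_left sum_distrib_right
        sum.swap[of _ "{..p}"] mult_ac)
       (rule sum.cong[OF refl], rule sum.swap)
  finally have eq: "(\<Sum>t\<in>PiE (insert j K) (\<lambda>_. {..d}). (\<Sum>k\<in>insert j K. of_int (s k) * \<theta> (t k)) ^ p * (\<Prod>k\<in>insert j K. c (t k))) = (\<Sum>i\<le>p. of_nat (p choose i) * ((\<Sum>r\<le>d. (of_int (s j) * \<theta> r) ^ i * c r) *
        (\<Sum>t\<in>PiE K (\<lambda>_. {..d}). Y t ^ (p - i) * C t)))" .
  have f1: "(\<Sum>t\<in>PiE K (\<lambda>_. {..d}). Y t ^ q * C t) \<in> \<int>" for q
    using insert.IH[of q] unfolding Y_def C_def by simp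
  have f2: "(\<Sum>r\<le>d. (of_int (s j) * \<theta> r) ^ i * c r) \<in> \<int>" for i
  proof -
    have "(\<Sum>r\<le>d. (of_int (s j) * \<theta> r) ^ i * c r) = of_int (s j ^ i) * (\<Sum>r\<le>d. \<theta> r ^ i * c r)"
      by (simp add: power_mult_distrib sum_distrib_left mult_ac)
    then show ?thesis using base by (simp add: Ints_mult)
  qed
  have "(\<Sum>i\<le>p. of_nat (p choose i) * ((\<Sum>r\<le>d. (of_int (s j) * \<theta> r) ^ i * c r) *
        (\<Sum>t\<in>PiE K (\<lambda>_. {..d}). Y t ^ (p - i) * C t))) \<in> \<int>"
    by (intro Ints_sum Ints_mult Ints_of_nat f1 f2)
  then show ?case using eq by simp
qed


lemma spec_AE:
  fixes A :: "real^'n^'n"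
  assumes sd: "spectral_decomposition A d \<theta> E" and r: "r \<le> d"
  shows "(A ** E r) $ x $ y = \<theta> r * E r $ x $ y"
proof -
  have A: "A = (\<Sum>s\<le>d. \<theta> s *\<^sub>R E s)" and orth: "\<And>s. s \<le> d \<Longrightarrow> s \<noteq> r \<Longrightarrow> E s ** E r = 0"
    and idem: "E r ** E r = E r"
    using sd r unfolding spectral_decomposition_def by auto
  have "(A ** E r) $ x $ y = (\<Sum>z\<in>UNIV. (\<Sum>s\<le>d. \<theta> s * E s $ x $ z) * E r $ z $ y)"
    by (simp add: A matrix_matrix_mult_def)
  also have "\<dots> = (\<Sum>s\<le>d. \<theta> s * (E s ** E r) $ x $ y)"
    by (simp add: matrix_matrix_mult_def sum_distrib_left sum_distrib_right mult_ac sum.swap[of _ UNIV])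
  also have "\<dots> = (\<Sum>s\<le>d. if s = r then \<theta> r * E r $ x $ y else 0)"
    by (intro sum.cong refl) (auto simp: orth idem)
  also have "\<dots> = \<theta> r * E r $ x $ y" using r by simp
  finally show ?thesis .
qed

lemma spec_base:
  fixes A :: "real^'n^'n"
  assumes sd: "spectral_decomposition A d \<theta> E" and Aint: "\<And>x y. A $ x $ y \<in> \<int>"
  shows "(\<Sum>r\<le>d. \<theta> r ^ q * E r $ x $ y) \<in> \<int>"
proof (induction q arbitrary: x y)
  case 0
  have "(\<Sum>r\<le>d. E r) = Finite_Cartesian_Product.mat 1" using sd unfolding spectral_decomposition_def by auto
  then have "(\<Sum>r\<le>d. E r $ x $ y) = (Finite_Cartesian_Product.mat 1 :: real^'n^'n) $ x $ y"
    by (metis sum_component)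
  then show ?case by (simp add: Finite_Cartesian_Product.mat_def)
next
  case (Suc q)
  have "(\<Sum>r\<le>d. \<theta> r ^ Suc q * E r $ x $ y) = (\<Sum>r\<le>d. \<theta> r ^ q * (A ** E r) $ x $ y)"
    using spec_AE[OF sd] by (intro sum.cong refl) (simp add: mult_ac)
  also have "\<dots> = (\<Sum>z\<in>UNIV. A $ x $ z * (\<Sum>r\<le>d. \<theta> r ^ q * E r $ z $ y))"
    by (simp add: matrix_matrix_mult_def sum_distrib_left sum_distrib_right mult_ac sum.swap[of _ UNIV])
  also have "\<dots> \<in> \<int>" by (intro Ints_sum Ints_mult Aint Suc)
  finally show ?case .
qed


lemma tensor_eig:
  fixes A :: "real^'n::finite^'n" and s :: "nat \<Rightarrow> int" and N :: nat and t :: "nat \<Rightarrow> nat"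
    and a b :: 'n
  assumes sd: "spectral_decomposition A d \<theta> E" and Aint: "\<And>x y. A $ x $ y \<in> \<int>"
    and t: "\<And>k. k < N \<Longrightarrow> t k \<le> d" and w: "(\<Prod>k<N. E (t k) $ a $ b) \<noteq> 0"
  shows "\<exists>p::int poly. p \<noteq> 0 \<and> poly (map_poly real_of_int p) (\<Sum>k<N. of_int (s k) * \<theta> (t k)) = 0"
proof -
  define U where "U = PiE {..<N} (\<lambda>_. UNIV :: 'n set)"
  define M where "M u u' = (\<Sum>k<N. s k * (if (\<forall>j<N. j \<noteq> k \<longrightarrow> u j = u' j) then \<lfloor>A $ (u k) $ (u' k)\<rfloor> else 0))"
    for u u' :: "nat \<Rightarrow> 'n"
  define v where "v u = (\<Prod>k<N. E (t k) $ (u k) $ b)" for u :: "nat \<Rightarrow> 'n"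
  define u0 where "u0 = (\<lambda>k. if k < N then a else undefined)"
  have fin: "finite U" unfolding U_def by (simp add: finite_PiE)
  have u0U: "u0 \<in> U" unfolding U_def u0_def by (auto simp: PiE_def extensional_def)
  have vu0: "v u0 \<noteq> 0" using w unfolding v_def u0_def by simp
  have Afl: "real_of_int \<lfloor>A $ x $ y\<rfloor> = A $ x $ y" for x y
    using Aint[of x y] by (metis Ints_cases floor_of_int)
  have ev: "(\<Sum>u'\<in>U. real_of_int (M u u') * v u') = (\<Sum>k<N. of_int (s k) * \<theta> (t k)) * v u"
    if u: "u \<in> U" for u
  proof -
    have inner: "(\<Sum>u'\<in>U. (if (\<forall>j<N. j \<noteq> k \<longrightarrow> u j = u' j) then A $ (u k) $ (u' k) else 0) * v u')
        = \<theta> (t k) * v u" if k: "k < N" for k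
    proof -
      define R where "R = (\<Prod>j\<in>{..<N} - {k}. E (t j) $ (u j) $ b)"
      have vupd: "v (u(k := y)) = E (t k) $ y $ b * R" for y
        unfolding v_def R_def using k
        by (subst prod.remove[of _ k]) (auto intro!: prod.cong)
      have vu: "v u = E (t k) $ (u k) $ b * R"
        using vupd[of "u k"] by simp
      have "(\<Sum>u'\<in>U. (if (\<forall>j<N. j \<noteq> k \<longrightarrow> u j = u' j) then A $ (u k) $ (u' k) else 0) * v u')
          = (\<Sum>u'\<in>{u'\<in>U. \<forall>j<N. j \<noteq> k \<longrightarrow> u j = u' j}. A $ (u k) $ (u' k) * v u')"
        unfolding sum.inter_filter[OF fin] by (intro sum.cong) auto
      also have "\<dots> = (\<Sum>y\<in>UNIV. A $ (u k) $ y * v (u(k := y)))"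
      proof -
        have key: "u(k := u' k) = u'" if "u' \<in> U" "\<forall>j<N. j \<noteq> k \<longrightarrow> u j = u' j" for u'
          using u that unfolding U_def
          by (auto simp: PiE_def extensional_def fun_eq_iff) (metis not_less)
        have mem: "u(k := y) \<in> {u'\<in>U. \<forall>j<N. j \<noteq> k \<longrightarrow> u j = u' j}" for y
          using u k unfolding U_def by (auto simp: PiE_def extensional_def)
        show ?thesis
          by (rule sum.reindex_bij_witness[of _ "\<lambda>y. u(k := y)" "\<lambda>u'. u' k"])
             (use key mem in auto)
      qed
      also have "\<dots> = (\<Sum>y\<in>UNIV. A $ (u k) $ y * E (t k) $ y $ b) * R"
        by (simp add: vupd sum_distrib_left sum_distrib_right mult_ac)
      also have "(\<Sum>y\<in>UNIV. A $ (u k) $ y * E (t k) $ y $ b) = (A ** E (t k)) $ (u k) $ b"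
        by (simp add: matrix_matrix_mult_def)
      also have "\<dots> = \<theta> (t k) * E (t k) $ (u k) $ b"
        by (rule spec_AE[OF sd t[OF k]])
      finally show ?thesis using vu by (simp add: mult_ac)
    qed
    have "(\<Sum>u'\<in>U. real_of_int (M u u') * v u')
        = (\<Sum>k<N. of_int (s k) * (\<Sum>u'\<in>U. (if (\<forall>j<N. j \<noteq> k \<longrightarrow> u j = u' j) then A $ (u k) $ (u' k) else 0) * v u'))"
      unfolding M_def
      by (simp add: sum_distrib_left sum_distrib_right sum.swap[of _ "{..<N}"] Afl if_distrib mult_ac cong: if_cong)
        (intro sum.cong refl, auto)
    also have "\<dots> = (\<Sum>k<N. of_int (s k) * (\<theta> (t k) * v u))"
      by (intro sum.cong refl) (simp add: inner)
    finally show ?thesis by (simp add: sum_distrib_left sum_distrib_right mult_ac)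
  qed
  show ?thesis by (rule eig_alg[OF fin u0U vu0 ev])
qed

lemma lborel_integral_prod_Basis:
  fixes g :: "'a::euclidean_space \<Rightarrow> real \<Rightarrow> complex"
  assumes int: "\<And>b. b\<in>Basis \<Longrightarrow> integrable lborel (g b)"
  shows "integrable lborel (\<lambda>x::'a. \<Prod>b\<in>Basis. g b (x \<bullet> b))"
    "integral\<^sup>L lborel (\<lambda>x::'a. \<Prod>b\<in>Basis. g b (x \<bullet> b)) = (\<Prod>b\<in>Basis. integral\<^sup>L lborel (g b))"
proof -
  interpret product_sigma_finite "\<lambda>_::'a. lborel :: real measure" ..
  have [measurable]: "g b \<in> borel_measurable borel" if "b \<in> Basis" for b
    using int[OF that] by (simp add: borel_measurable_integrable)
  have m1: "(\<lambda>f. \<Sum>b\<in>Basis. f b *\<^sub>R b :: 'a) \<in> measurable (Pi\<^sub>M Basis (\<lambda>_. lborel)) borel"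
    by measurable
  have m2: "(\<lambda>x::'a. \<Prod>b\<in>Basis. g b (x \<bullet> b)) \<in> borel_measurable borel"
    by measurable
  have eq: "(\<Sum>b'\<in>Basis. f b' *\<^sub>R b' :: 'a) \<bullet> b = f b" if "b \<in> Basis" for f b
    using that by (simp add: inner_sum_left inner_Basis if_distrib cong: if_cong)
  have "integrable (Pi\<^sub>M Basis (\<lambda>_. lborel)) (\<lambda>f. \<Prod>b\<in>Basis. g b (f b))"
    by (rule product_integrable_prod) (auto intro: int)
  then show "integrable lborel (\<lambda>x::'a. \<Prod>b\<in>Basis. g b (x \<bullet> b))"
    by (subst lborel_eq, subst integrable_distr_eq[OF m1 m2]) (simp add: eq)
  have "integral\<^sup>L lborel (\<lambda>x::'a. \<Prod>b\<in>Basis. g b (x \<bullet> b))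
     = integral\<^sup>L (Pi\<^sub>M Basis (\<lambda>_. lborel)) (\<lambda>f. \<Prod>b\<in>Basis. g b (f b))"
    by (subst lborel_eq, subst integral_distr[OF m1 m2]) (simp add: eq)
  also have "\<dots> = (\<Prod>b\<in>Basis. integral\<^sup>L lborel (g b))"
    by (rule product_integral_prod) (auto intro: int)
  finally show "integral\<^sup>L lborel (\<lambda>x::'a. \<Prod>b\<in>Basis. g b (x \<bullet> b)) = (\<Prod>b\<in>Basis. integral\<^sup>L lborel (g b))" .
qed

lemma one_dim:
  fixes n :: int
  shows "integrable lborel (\<lambda>t. indicator {0..2*pi} t *\<^sub>R exp (\<i> * complex_of_real (real_of_int n * t)))"
    "integral\<^sup>L lborel (\<lambda>t. indicator {0..2*pi} t *\<^sub>R exp (\<i> * complex_of_real (real_of_int n * t)))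
       = (if n = 0 then complex_of_real (2*pi) else 0)"
proof -
  have cont: "continuous_on {0..2*pi} (\<lambda>t. exp (\<i> * complex_of_real (real_of_int n * t)))"
    by (intro continuous_intros)
  show "integrable lborel (\<lambda>t. indicator {0..2*pi} t *\<^sub>R exp (\<i> * complex_of_real (real_of_int n * t)))"
    using borel_integrable_atLeastAtMost'[OF cont] unfolding set_integrable_def .
  show "integral\<^sup>L lborel (\<lambda>t. indicator {0..2*pi} t *\<^sub>R exp (\<i> * complex_of_real (real_of_int n * t)))
       = (if n = 0 then complex_of_real (2*pi) else 0)"
  proof (cases "n = 0")
    case True
    have "integral\<^sup>L lborel (\<lambda>t. indicator {0..2*pi} t *\<^sub>R exp (\<i> * complex_of_real (real_of_int n * t)))
       = (\<lambda>x. complex_of_real x) (2*pi) - (\<lambda>x. complex_of_real x) 0"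
      by (rule integral_FTC_atLeastAtMost) (auto simp: True intro!: derivative_eq_intros continuous_intros)
    then show ?thesis using True by simp
  next
    case False
    define G where "G = (\<lambda>x::complex. exp (\<i> * of_int n * x) / (\<i> * of_int n))"
    have "integral\<^sup>L lborel (\<lambda>t. indicator {0..2*pi} t *\<^sub>R exp (\<i> * complex_of_real (real_of_int n * t)))
       = (\<lambda>x. G (of_real x)) (2*pi) - (\<lambda>x. G (of_real x)) 0"
    proof (rule integral_FTC_atLeastAtMost)
      fix x :: real
      have "(G has_field_derivative exp (\<i> * complex_of_real (real_of_int n * x))) (at (of_real x))"
        unfolding G_def using False
        by (auto intro!: derivative_eq_intros simp: mult_ac)
      then show "((\<lambda>x. G (complex_of_real x)) has_vector_derivative exp (\<i> * complex_of_real (real_of_int n * x))) (at x within {0..2 * pi})"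
        by (rule has_vector_derivative_real_field)
    qed (use cont in auto)
    also have "exp (\<i> * of_int n * of_real (2*pi)) = 1"
      using exp_integer_2pi[of "of_int n"] by (simp add: mult_ac)
    then have "(\<lambda>x. G (of_real x)) (2*pi) - (\<lambda>x. G (of_real x)) 0 = 0"
      by (simp add: G_def)
    finally show ?thesis using False by simp
  qed
qed


lemma torus_char:
  fixes u :: "'k::finite \<Rightarrow> int"
  shows "((\<lambda>z. exp (\<i> * complex_of_real (\<Sum>l\<in>UNIV. real_of_int (u l) * z$l))) has_integral
           (if \<forall>l. u l = 0 then complex_of_real ((2*pi)^CARD('k)) else 0)) (cbox (0::real^'k) (\<chi> _. 2*pi))"
proof -
  define h where "h l t = indicator {0..2*pi} t *\<^sub>R exp (\<i> * complex_of_real (real_of_int (u l) * t))" for l t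
  define g where "g b = h (SOME l. b = axis l (1::real))" for b :: "real^'k"
  have gax: "g (axis l 1) = h l" for l
    unfolding g_def by (rule arg_cong[where f=h]) (auto simp: axis_eq_axis)
  have B: "(Basis :: (real^'k) set) = range (\<lambda>l. axis l 1)"
    by (auto simp: Basis_vec_def)
  have inj: "inj (\<lambda>l::'k. axis l (1::real))"
    by (auto simp: inj_def axis_eq_axis)
  have prodeq: "(\<Prod>b\<in>Basis. g b (x \<bullet> b)) = (\<Prod>l\<in>UNIV. h l (x $ l))" for x :: "real^'k"
    by (simp add: B prod.reindex[OF inj] gax inner_axis)
  have intg: "integrable lborel (g b)" if bB: "b \<in> Basis" for b
  proof -
    obtain l where "b = axis l 1" using bB B by auto
    then show ?thesis using one_dim(1)[of "u l"] by (simp add: gax h_def[abs_def])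
  qed
  have I: "integrable lborel (\<lambda>x::real^'k. \<Prod>l\<in>UNIV. h l (x $ l))"
    using lborel_integral_prod_Basis(1)[of g, OF intg] by (simp add: prodeq)
  have V: "integral\<^sup>L lborel (\<lambda>x::real^'k. \<Prod>l\<in>UNIV. h l (x $ l)) = (\<Prod>b\<in>Basis. integral\<^sup>L lborel (g b))"
    using lborel_integral_prod_Basis(2)[of g, OF intg] by (simp add: prodeq)
  also have "\<dots> = (\<Prod>l\<in>UNIV. integral\<^sup>L lborel (h l))"
    by (simp add: B prod.reindex[OF inj] gax)
  also have "\<dots> = (\<Prod>l\<in>UNIV. (if u l = 0 then complex_of_real (2*pi) else 0))"
    unfolding h_def using one_dim(2) by simp
  also have "\<dots> = (if \<forall>l. u l = 0 then complex_of_real ((2*pi)^CARD('k)) else 0)"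
    by auto
  finally have V: "integral\<^sup>L lborel (\<lambda>x::real^'k. \<Prod>l\<in>UNIV. h l (x $ l)) = (if \<forall>l. u l = 0 then complex_of_real ((2*pi)^CARD('k)) else 0)" .
  have eqf: "(\<Prod>l\<in>UNIV. h l (x $ l)) = (if x \<in> cbox (0::real^'k) (\<chi> _. 2*pi)
      then exp (\<i> * complex_of_real (\<Sum>l\<in>UNIV. real_of_int (u l) * x$l)) else 0)" for x
  proof -
    have "(\<Prod>l\<in>UNIV. h l (x $ l)) = (\<Prod>l\<in>UNIV. (indicator {0..2*pi} (x$l) :: complex)) *
       (\<Prod>l\<in>UNIV. exp (\<i> * complex_of_real (real_of_int (u l) * x$l)))"
      unfolding prod.distrib[symmetric] by (intro prod.cong refl) (simp add: h_def scaleR_conv_of_real indicator_def)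
    also have "(\<Prod>l\<in>UNIV. exp (\<i> * complex_of_real (real_of_int (u l) * x$l)))
       = exp (\<i> * complex_of_real (\<Sum>l\<in>UNIV. real_of_int (u l) * x$l))"
      by (simp add: exp_sum[symmetric] sum_distrib_left)
    also have "(\<Prod>l\<in>UNIV. (indicator {0..2*pi} (x$l) :: complex)) = (if x \<in> cbox (0::real^'k) (\<chi> _. 2*pi) then 1 else 0)"
      by (auto simp: mem_box_cart indicator_def)
    finally show ?thesis by simp
  qed
  have "((\<lambda>x::real^'k. \<Prod>l\<in>UNIV. h l (x $ l)) has_integral (if \<forall>l. u l = 0 then complex_of_real ((2*pi)^CARD('k)) else 0)) UNIV"
    using has_integral_integral_lborel[OF I] V by simp
  then have "((\<lambda>z. exp (\<i> * complex_of_real (\<Sum>l\<in>UNIV. real_of_int (u l) * z$l))) has_integral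
     (if \<forall>l. u l = 0 then complex_of_real ((2*pi)^CARD('k)) else 0)) (cbox (0::real^'k) (\<chi> _. 2*pi))"
    by (simp add: eqf has_integral_restrict_UNIV)
  then show ?thesis .
qed


theorem theorem5p2:
  fixes adj :: "'n::finite \<Rightarrow> 'n \<Rightarrow> bool"
    and d :: nat and \<theta> :: "nat \<Rightarrow> real" and E :: "nat \<Rightarrow> real^'n^'n"
    and w :: "'k::finite \<Rightarrow> real" and f :: "nat \<Rightarrow> 'k \<Rightarrow> int"
    and a b :: 'n and m :: nat
  assumes "simple_graph adj"
    and "spectral_decomposition (adjacency_matrix adj) d \<theta> E"
    and "rat_lin_indep w"
    and "\<forall>r\<le>d. \<theta> r = (\<Sum>l\<in>UNIV. real_of_int (f r l) * w l)"
    and "m \<ge> 1"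
  shows "(1 / (2 * pi) ^ CARD('k)) *
           integral (cbox (0::real^'k) (\<chi> _. 2 * pi))
             (\<lambda>z. cmod (\<Sum>r\<le>d. complex_of_real (E r $ a $ b) *
                     exp (\<i> * complex_of_real (\<Sum>l\<in>UNIV. real_of_int (f r l) * z $ l))) ^ (2 * m))
         \<in> \<rat>"
proof -
  note sd = assms(2)
  note lin = assms(3)[unfolded rat_lin_indep_def]
  note th = assms(4)
  define c where "c r = E r $ a $ b" for r
  define \<phi> where "\<phi> r z = (\<Sum>l\<in>UNIV. real_of_int (f r l) * z $ l)" for r and z :: "real^'k"
  define F where "F z = (\<Sum>r\<le>d. complex_of_real (c r) * exp (\<i> * complex_of_real (\<phi> r z)))" for z
  define N where "N = 2 * m"
  define sg where "sg k = (if k < m then 1 else -1 :: int)" for k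
  define T where "T = PiE {..<N} (\<lambda>_. {..d})"
  define W where "W t = (\<Prod>k<N. c (t k))" for t
  define V where "V t l = (\<Sum>k<N. sg k * f (t k) l)" for t l
  define D where "D t = (\<Sum>k<N. of_int (sg k) * \<theta> (t k))" for t
  define K where "K = CARD('k)"
  define cube where "cube = cbox (0::real^'k) (\<chi> _. 2 * pi)"
  have finT: "finite T" unfolding T_def by (simp add: finite_PiE)
  have Aint: "adjacency_matrix adj $ x $ y \<in> \<int>" for x y
    by (simp add: adjacency_matrix_def)
  define G where "G k z = (\<Sum>r\<le>d. complex_of_real (c r) * exp (\<i> * complex_of_real (of_int (sg k) * \<phi> r z)))" for k z
  have Glow: "G k z = F z" if "k < m" for k z
    using that unfolding G_def F_def sg_def by simp
  have Ghigh: "G k z = cnj (F z)" if "\<not> k < m" for k z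
    using that unfolding G_def F_def sg_def by (simp add: exp_cnj)
  have pw: "complex_of_real (cmod (F z) ^ (2 * m)) =
      (\<Sum>t\<in>T. complex_of_real (W t) * exp (\<i> * complex_of_real (\<Sum>l\<in>UNIV. real_of_int (V t l) * z $ l)))" for z
  proof -
    have "complex_of_real (cmod (F z) ^ (2 * m)) = (F z * cnj (F z)) ^ m"
      by (simp add: power_mult complex_norm_square[symmetric])
    also have "\<dots> = (\<Prod>k<N. G k z)"
    proof -
      have split: "{..<N} = {..<m} \<union> {m..<2*m}" unfolding N_def by auto
      have "(\<Prod>k<N. G k z) = (\<Prod>k<m. G k z) * (\<Prod>k\<in>{m..<2*m}. G k z)"
        unfolding split by (rule prod.union_disjoint) auto
      also have "\<dots> = F z ^ m * cnj (F z) ^ m"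
        using Glow Ghigh by simp
      finally show ?thesis by (simp add: power_mult_distrib)
    qed
    also have "\<dots> = (\<Sum>t\<in>T. \<Prod>k<N. complex_of_real (c (t k)) * exp (\<i> * complex_of_real (of_int (sg k) * \<phi> (t k) z)))"
      unfolding G_def T_def by (rule prod_sum_PiE) auto
    also have "\<dots> = (\<Sum>t\<in>T. complex_of_real (W t) * exp (\<i> * complex_of_real (\<Sum>l\<in>UNIV. real_of_int (V t l) * z $ l)))"
    proof (intro sum.cong refl)
      fix t
      have e: "(\<Sum>k<N. \<i> * complex_of_real (of_int (sg k) * \<phi> (t k) z)) = \<i> * complex_of_real (\<Sum>l\<in>UNIV. real_of_int (V t l) * z $ l)"
        unfolding V_def \<phi>_def
        by (simp add: sum_distrib_left sum_distrib_right sum.swap[of _ "{..<N}"] mult_ac)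
      show "(\<Prod>k<N. complex_of_real (c (t k)) * exp (\<i> * complex_of_real (of_int (sg k) * \<phi> (t k) z))) =
          complex_of_real (W t) * exp (\<i> * complex_of_real (\<Sum>l\<in>UNIV. real_of_int (V t l) * z $ l))"
      proof -
        have "(\<Prod>k<N. complex_of_real (c (t k)) * exp (\<i> * complex_of_real (of_int (sg k) * \<phi> (t k) z)))
          = (\<Prod>k<N. complex_of_real (c (t k))) * (\<Prod>k<N. exp (\<i> * complex_of_real (of_int (sg k) * \<phi> (t k) z)))"
          by (rule prod.distrib)
        also have "(\<Prod>k<N. exp (\<i> * complex_of_real (of_int (sg k) * \<phi> (t k) z)))
            = exp (\<Sum>k<N. \<i> * complex_of_real (of_int (sg k) * \<phi> (t k) z))"
          by (rule exp_sum[symmetric]) simp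
        also have "(\<Prod>k<N. complex_of_real (c (t k))) = complex_of_real (W t)"
          unfolding W_def by simp
        finally show ?thesis unfolding e .
      qed
    qed
    finally show ?thesis .
  qed
  define C where "C = (\<Sum>t\<in>T. complex_of_real (W t) * (if \<forall>l. V t l = 0 then complex_of_real ((2*pi)^K) else 0))"
  have "((\<lambda>z. \<Sum>t\<in>T. complex_of_real (W t) * exp (\<i> * complex_of_real (\<Sum>l\<in>UNIV. real_of_int (V t l) * z $ l)))
      has_integral C) cube"
    unfolding C_def cube_def K_def
    by (intro has_integral_sum finT has_integral_mult_right torus_char)
  then have "((\<lambda>z. complex_of_real (cmod (F z) ^ (2 * m))) has_integral C) cube"
    unfolding pw[symmetric] .
  from has_integral_linear[OF this bounded_linear_Re]
  have "((\<lambda>z. cmod (F z) ^ (2 * m)) has_integral Re C) cube"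
    by (simp add: o_def)
  then have intval: "integral cube (\<lambda>z. cmod (F z) ^ (2 * m)) = Re C"
    by (rule integral_unique)
  have ReC: "Re C = (\<Sum>t\<in>T. (if \<forall>l. V t l = 0 then W t else 0)) * (2*pi)^K"
    unfolding C_def sum_distrib_right Re_sum by (intro sum.cong refl) simp
  have VD: "(\<forall>l. V t l = 0) \<longleftrightarrow> D t = 0" if t: "t \<in> T" for t
  proof -
    have tk: "t k \<le> d" if "k < N" for k using t that unfolding T_def by auto
    have "D t = (\<Sum>k<N. of_int (sg k) * (\<Sum>l\<in>UNIV. real_of_int (f (t k) l) * w l))"
      unfolding D_def
    proof (rule sum.cong[OF refl])
      fix k assume "k \<in> {..<N}"
      then have "t k \<le> d" using tk by simp
      then show "of_int (sg k) * \<theta> (t k) = of_int (sg k) * (\<Sum>l\<in>UNIV. real_of_int (f (t k) l) * w l)"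
        using th by simp
    qed
    also have "\<dots> = (\<Sum>k<N. \<Sum>l\<in>UNIV. of_int (sg k) * real_of_int (f (t k) l) * w l)"
      by (simp add: sum_distrib_left mult_ac)
    also have "\<dots> = (\<Sum>l\<in>UNIV. \<Sum>k<N. of_int (sg k) * real_of_int (f (t k) l) * w l)"
      by (rule sum.swap)
    also have "\<dots> = (\<Sum>l\<in>UNIV. real_of_int (V t l) * w l)"
      unfolding V_def by (simp add: sum_distrib_right)
    finally have Dt: "D t = (\<Sum>l\<in>UNIV. real_of_int (V t l) * w l)" .
    show ?thesis
    proof
      assume "\<forall>l. V t l = 0" then show "D t = 0" using Dt by simp
    next
      assume "D t = 0"
      then have S0: "(\<Sum>l\<in>UNIV. real_of_int (V t l) * w l) = 0" using Dt by simp
      have Qs: "\<forall>l. real_of_int (V t l) \<in> \<rat>" by simp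
      have "\<forall>l. real_of_int (V t l) = 0"
        using spec[OF lin, of "\<lambda>l. real_of_int (V t l)"] Qs S0 by blast
      then show "\<forall>l. V t l = 0" by simp
    qed
  qed
  define Q where "Q = (\<Sum>t\<in>T. (if D t = 0 then W t else 0))"
  have main_eq: "(1 / (2 * pi) ^ K) * integral cube (\<lambda>z. cmod (F z) ^ (2 * m)) = Q"
  proof -
    have "(1 / (2 * pi) ^ K) * integral cube (\<lambda>z. cmod (F z) ^ (2 * m)) = (\<Sum>t\<in>T. (if \<forall>l. V t l = 0 then W t else 0))"
      unfolding intval ReC by simp
    also have "\<dots> = Q"
      unfolding Q_def by (rule sum.cong[OF refl]) (simp add: VD)
    finally show ?thesis .
  qed
  define T' where "T' = {t\<in>T. W t \<noteq> 0 \<and> D t \<noteq> 0}"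
  have finT': "finite T'" unfolding T'_def using finT by simp
  have ex: "\<exists>q::int poly. poly q 0 \<noteq> 0 \<and> poly (map_poly real_of_int q) (D t) = 0" if "t \<in> T'" for t
  proof -
    have tk: "t k \<le> d" if "k < N" for k using \<open>t \<in> T'\<close> that unfolding T'_def T_def by auto
    have "(\<Prod>k<N. E (t k) $ a $ b) \<noteq> 0" using \<open>t \<in> T'\<close> unfolding T'_def W_def c_def by auto
    from tensor_eig[OF sd Aint tk this, of sg]
    obtain p :: "int poly" where "p \<noteq> 0" "poly (map_poly real_of_int p) (D t) = 0"
      unfolding D_def by blast
    then show ?thesis using strip_zero_root \<open>t \<in> T'\<close> unfolding T'_def by blast
  qed
  then obtain qf where qf: "\<And>t. t \<in> T' \<Longrightarrow> poly (qf t) 0 \<noteq> 0 \<and> poly (map_poly real_of_int (qf t)) (D t) = 0"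
    by metis
  define g where "g = (\<Prod>t\<in>T'. qf t)"
  define Gp where "Gp = map_poly real_of_int g"
  have polyGp: "poly Gp x = (\<Prod>t\<in>T'. poly (map_poly real_of_int (qf t)) x)" for x
    unfolding Gp_def g_def by (simp add: hom_distribs poly_prod)
  have g0: "poly g 0 \<noteq> 0"
    unfolding g_def using qf finT' by (simp add: poly_prod)
  have Gp0: "poly Gp 0 = of_int (poly g 0)"
    unfolding Gp_def by (simp add: of_int_hom.poly_map_poly)
  have Gp0': "poly Gp 0 \<noteq> 0" using g0 Gp0 by simp
  have termeq: "(if D t = 0 then W t else 0) = W t * poly Gp (D t) / poly Gp 0" if "t \<in> T" for t
  proof (cases "W t = 0")
    case True then show ?thesis by simp
  next
    case False
    show ?thesis
    proof (cases "D t = 0")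
      case True then show ?thesis using Gp0' by simp
    next
      case nz: False
      then have "t \<in> T'" unfolding T'_def using that False by simp
      then have "poly Gp (D t) = 0" unfolding polyGp using finT' qf
        by (meson prod_zero_iff)
      then show ?thesis using nz by simp
    qed
  qed
  have Qeq: "Q = (\<Sum>t\<in>T. W t * poly Gp (D t)) / poly Gp 0"
    unfolding Q_def using termeq by (simp add: sum_divide_distrib)
  have base: "(\<Sum>r\<le>d. \<theta> r ^ q * c r) \<in> \<int>" for q
    unfolding c_def by (rule spec_base[OF sd Aint])
  have mom: "(\<Sum>t\<in>T. D t ^ p * W t) \<in> \<int>" for p
    using moment_int[OF base, of "{..<N}" sg p] unfolding T_def D_def W_def by simp
  have "(\<Sum>t\<in>T. W t * poly Gp (D t)) = (\<Sum>i\<le>degree Gp. coeff Gp i * (\<Sum>t\<in>T. D t ^ i * W t))"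
    by (simp add: poly_altdef sum_distrib_left sum_distrib_right sum.swap[of _ T] mult_ac)
  also have "\<dots> \<in> \<int>"
    by (intro Ints_sum Ints_mult mom) (simp add: Gp_def)
  finally have numZ: "(\<Sum>t\<in>T. W t * poly Gp (D t)) \<in> \<int>" .
  have "Q \<in> \<rat>"
    unfolding Qeq Gp0 using numZ by (intro Rats_divide) (auto simp: Ints_subset_Rats[THEN subsetD])
  then show ?thesis
    using main_eq unfolding cube_def K_def F_def \<phi>_def c_def by simp
qed

end
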